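(* Let $A$ be the set of cyclic Carlitz compositions. Then \[ \sum_{W\in A}x^{\mathrm{sum}(W)}=\frac{\sum_{i=1}^\infty\frac{x^i}{(1+x^i)^2}}{1-\sum_{i=1}^\infty\frac{x^i}{1+x^i}}+\sum_{i=1}^\infty\frac{x^{2i}}{1+x^i}. \]
   Context: A composition is a nonempty finite sequence $W=(c_1,\ldots,c_l)$ of positive integers, with $\mathrm{sum}(W)=c_1+\cdots+c_l$. It is a Carlitz composition if no two adjacent parts are equal, and a cyclic Carlitz composition if moreover, when $l\ge2$, its first and last parts are not equal (equivalently, every cyclic rotation of it has no two adjacent equal parts); compositions with a single part are included. *)

theory Defs
  imports "HOL-Computational_Algebra.Formal_Power_Series"
begin

definition composition :: "nat list \<Rightarrow> bool" where
  "composition W \<longleftrightarrow> W \<noteq> [] \<and> (\<forall>c\<in>set W. 0 < c)"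

definition carlitz :: "nat list \<Rightarrow> bool" where
  "carlitz W \<longleftrightarrow> composition W \<and> (\<forall>i. Suc i < length W \<longrightarrow> W ! i \<noteq> W ! Suc i)"

definition cyclic_carlitz :: "nat list \<Rightarrow> bool" where
  "cyclic_carlitz W \<longleftrightarrow> carlitz W \<and> (2 \<le> length W \<longrightarrow> hd W \<noteq> last W)"

definition cyc_carlitz_gf :: "real fps" where
  "cyc_carlitz_gf = Abs_fps (\<lambda>n. real (card {W. cyclic_carlitz W \<and> sum_list W = n}))"

end

theory Submission
  imports Defs
begin

unbundle fps_syntax


lemma adj_iff: "(\<forall>i. Suc i < length (W::nat list) \<longrightarrow> W ! i \<noteq> W ! Suc i) \<longleftrightarrow> successively (\<noteq>) W"
proof (induction "(\<noteq>) :: nat\<Rightarrow>nat\<Rightarrow>bool" W rule: successively.induct)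
  case (3 x y xs)
  show ?case
  proof
    assume H: "\<forall>i. Suc i < length (x # y # xs) \<longrightarrow> (x # y # xs) ! i \<noteq> (x # y # xs) ! Suc i"
    have "x \<noteq> y" using H[rule_format, of 0] by simp
    moreover have "\<forall>i. Suc i < length (y # xs) \<longrightarrow> (y # xs) ! i \<noteq> (y # xs) ! Suc i"
      using H[rule_format, of "Suc _"] by auto
    ultimately show "successively (\<noteq>) (x # y # xs)" using "3" by simp
  next
    assume H: "successively (\<noteq>) (x # y # xs)"
    show "\<forall>i. Suc i < length (x # y # xs) \<longrightarrow> (x # y # xs) ! i \<noteq> (x # y # xs) ! Suc i"
    proof (intro allI impI)
      fix i assume "Suc i < length (x # y # xs)"
      then show "(x # y # xs) ! i \<noteq> (x # y # xs) ! Suc i"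
        using H "3" by (cases i) auto
    qed
  qed
qed auto

lemma carlitz_alt: "carlitz W \<longleftrightarrow> W \<noteq> [] \<and> (\<forall>c\<in>set W. 0 < c) \<and> successively (\<noteq>) W"
  unfolding carlitz_def composition_def adj_iff by simp

lemma carlitz_Cons: "carlitz (x # W) \<longleftrightarrow> 0 < x \<and> (W = [] \<or> carlitz W \<and> hd W \<noteq> x)"
  unfolding carlitz_alt by (auto simp: successively_Cons)

lemma carlitz_rev: "carlitz (rev W) \<longleftrightarrow> carlitz W"
proof -
  have "successively (\<lambda>x y::nat. y \<noteq> x) W = successively (\<noteq>) W"
    by (induction W) (auto simp: successively_Cons)
  then show ?thesis unfolding carlitz_alt by simp
qed

lemma comp_len_le: "\<forall>c\<in>set W. 0 < (c::nat) \<Longrightarrow> length W \<le> sum_list W"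
  by (induction W) auto

lemma carlitz_sum_pos: "carlitz W \<Longrightarrow> 0 < sum_list W"
  unfolding carlitz_alt by (cases W) auto

lemma carlitz_hd_le: "carlitz W \<Longrightarrow> hd W \<le> sum_list W"
  unfolding carlitz_alt by (cases W) auto

lemma carlitz_last_le: "carlitz W \<Longrightarrow> last W \<le> sum_list W"
  unfolding carlitz_alt by (simp add: member_le_sum_list)

lemma finite_car: "finite {W. carlitz W \<and> P W \<and> sum_list W = n}"
proof (rule finite_subset[OF _ finite_lists_length_le[of "{0..n}" n]])
  show "{W. carlitz W \<and> P W \<and> sum_list W = n} \<subseteq> {xs. set xs \<subseteq> {0..n} \<and> length xs \<le> n}"
    by (auto simp: carlitz_alt member_le_sum_list intro!: comp_len_le)
qed auto

definition "car n = {W. carlitz W \<and> sum_list W = n}"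
definition "cS j n = {W. carlitz W \<and> sum_list W = n \<and> hd W = j}"
definition "cL j n = {W. carlitz W \<and> sum_list W = n \<and> last W = j}"
definition "cE j n = {W. carlitz W \<and> sum_list W = n \<and> hd W = j \<and> last W = j}"

lemma finite_car': "finite (car n)"
  using finite_car[of "\<lambda>_. True" n] by (simp add: car_def)
lemma fin_cS: "finite (cS j n)"
  by (rule finite_subset[OF _ finite_car'[of n]]) (auto simp: car_def cS_def)
lemma fin_cL: "finite (cL j n)"
  by (rule finite_subset[OF _ finite_car'[of n]]) (auto simp: car_def cL_def)
lemma fin_cE: "finite (cE j n)"
  by (rule finite_subset[OF _ finite_car'[of n]]) (auto simp: car_def cE_def)

lemma card_cL: "card (cL j n) = card (cS j n)"
proof -
  have "bij_betw rev (cL j n) (cS j n)"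
  proof (rule bij_betw_byWitness[where f'=rev])
    show "rev ` cL j n \<subseteq> cS j n"
      by (auto simp: cL_def cS_def carlitz_rev hd_rev)
    show "rev ` cS j n \<subseteq> cL j n"
      by (auto simp: cL_def cS_def carlitz_rev last_rev)
  qed auto
  then show ?thesis by (rule bij_betw_same_card)
qed

lemma R1:
  assumes "0 < j"
  shows "real (card (cS j n)) = (if n = j then 1 else 0) +
     (if j < n then real (card (car (n-j))) - real (card (cS j (n-j))) else 0)"
proof -
  define B where "B = (if j < n then car (n-j) - cS j (n-j) else {})"
  have eq: "cS j n = (if n = j then {[j]} else {}) \<union> Cons j ` B"
  proof (rule set_eqI)
    fix W
    show "W \<in> cS j n \<longleftrightarrow> W \<in> (if n = j then {[j]} else {}) \<union> Cons j ` B"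
    proof
      assume W: "W \<in> cS j n"
      then obtain W' where W': "W = j # W'" unfolding cS_def carlitz_alt
        by (cases W) auto
      show "W \<in> (if n = j then {[j]} else {}) \<union> Cons j ` B"
      proof (cases "W' = []")
        case True then show ?thesis using W W' by (auto simp: cS_def)
      next
        case False
        then have "carlitz W'" "hd W' \<noteq> j" using W W' by (auto simp: cS_def carlitz_Cons)
        moreover have "sum_list W' = n - j" "j < n" using W W' carlitz_sum_pos[OF \<open>carlitz W'\<close>]
          by (auto simp: cS_def)
        ultimately have "W' \<in> B" by (auto simp: B_def car_def cS_def)
        then show ?thesis using W' by auto
      qed
    next
      assume "W \<in> (if n = j then {[j]} else {}) \<union> Cons j ` B"
      then show "W \<in> cS j n" using assms
        by (auto simp: B_def car_def cS_def carlitz_Cons split: if_splits)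
    qed
  qed
  have fB: "finite B" by (simp add: B_def finite_car')
  have dis: "(if n = j then {[j]} else {}) \<inter> Cons j ` B = {}"
    by (auto simp: B_def car_def carlitz_alt)
  have "card (cS j n) = card (if n = j then {[j]} else ({}::nat list set)) + card (Cons j ` B)"
    unfolding eq by (rule card_Un_disjoint) (use fB dis in auto)
  also have "card (Cons j ` B) = card B" by (rule card_image) auto
  finally have c: "card (cS j n) = (if n = j then 1 else 0) + card B" by simp
  have sub: "cS j (n-j) \<subseteq> car (n-j)" by (auto simp: cS_def car_def)
  have "real (card B) = (if j < n then real (card (car (n-j))) - real (card (cS j (n-j))) else 0)"
    using card_Diff_subset[OF fin_cS sub] card_mono[OF finite_car' sub] by (simp add: B_def of_nat_diff)
  then show ?thesis using c by simp
qed

lemma R2: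
  assumes "0 < j"
  shows "real (card (cE j n)) = (if n = j then 1 else 0) +
     (if j < n then real (card (cS j (n-j))) - real (card (cE j (n-j))) else 0)"
proof -
  define B where "B = (if j < n then cL j (n-j) - cE j (n-j) else {})"
  have eq: "cE j n = (if n = j then {[j]} else {}) \<union> Cons j ` B"
  proof (rule set_eqI)
    fix W
    show "W \<in> cE j n \<longleftrightarrow> W \<in> (if n = j then {[j]} else {}) \<union> Cons j ` B"
    proof
      assume W: "W \<in> cE j n"
      then obtain W' where W': "W = j # W'" unfolding cE_def carlitz_alt
        by (cases W) auto
      show "W \<in> (if n = j then {[j]} else {}) \<union> Cons j ` B"
      proof (cases "W' = []")
        case True then show ?thesis using W W' by (auto simp: cE_def)
      next
        case False
        then have "carlitz W'" "hd W' \<noteq> j" "last W' = j" using W W' by (auto simp: cE_def carlitz_Cons)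
        moreover have "sum_list W' = n - j" "j < n" using W W' carlitz_sum_pos[OF \<open>carlitz W'\<close>]
          by (auto simp: cE_def)
        ultimately have "W' \<in> B" by (auto simp: B_def cL_def cE_def)
        then show ?thesis using W' by auto
      qed
    next
      assume "W \<in> (if n = j then {[j]} else {}) \<union> Cons j ` B"
      then show "W \<in> cE j n" using assms
        by (auto simp: B_def cL_def cE_def carlitz_Cons split: if_splits)
    qed
  qed
  have fB: "finite B" by (simp add: B_def fin_cL)
  have dis: "(if n = j then {[j]} else {}) \<inter> Cons j ` B = {}"
    by (auto simp: B_def cL_def carlitz_alt)
  have "card (cE j n) = card (if n = j then {[j]} else ({}::nat list set)) + card (Cons j ` B)"
    unfolding eq by (rule card_Un_disjoint) (use fB dis in auto)
  also have "card (Cons j ` B) = card B" by (rule card_image) auto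
  finally have c: "card (cE j n) = (if n = j then 1 else 0) + card B" by simp
  have sub: "cE j (n-j) \<subseteq> cL j (n-j)" by (auto simp: cE_def cL_def)
  have "real (card B) = (if j < n then real (card (cS j (n-j))) - real (card (cE j (n-j))) else 0)"
    using card_Diff_subset[OF fin_cE sub] card_mono[OF fin_cL sub] card_cL
    by (simp add: B_def of_nat_diff)
  then show ?thesis using c by simp
qed


lemma card_car_sum: "card (car n) = (\<Sum>i<n. card (cS (Suc i) n))"
proof -
  have "car n = (\<Union>i\<in>{..<n}. cS (Suc i) n)"
  proof (rule set_eqI)
    fix W show "W \<in> car n \<longleftrightarrow> W \<in> (\<Union>i\<in>{..<n}. cS (Suc i) n)"
    proof
      assume W: "W \<in> car n"
      then have "carlitz W" by (simp add: car_def)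
      then have "0 < hd W" "hd W \<le> n" using W carlitz_hd_le[of W]
        by (auto simp: car_def carlitz_alt)
      then show "W \<in> (\<Union>i\<in>{..<n}. cS (Suc i) n)" using W
        by (auto simp: car_def cS_def intro!: bexI[of _ "hd W - 1"])
    qed (auto simp: car_def cS_def)
  qed
  also have "card \<dots> = (\<Sum>i<n. card (cS (Suc i) n))"
    by (rule card_UN_disjoint) (use fin_cS in \<open>auto simp: cS_def\<close>)
  finally show ?thesis .
qed

lemma R3: "real (card {W. cyclic_carlitz W \<and> sum_list W = n}) =
   real (card (car n)) - (\<Sum>i<n. real (card (cE (Suc i) n))) + (if 0 < n then 1 else 0)"
proof -
  define H where "H = {W\<in>car n. hd W = last W}"
  define L where "L = {W\<in>H. length W < 2}"
  have H: "H = (\<Union>i\<in>{..<n}. cE (Suc i) n)"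
  proof (rule set_eqI)
    fix W show "W \<in> H \<longleftrightarrow> W \<in> (\<Union>i\<in>{..<n}. cE (Suc i) n)"
    proof
      assume W: "W \<in> H"
      then have "carlitz W" by (simp add: H_def car_def)
      then have "0 < hd W" "hd W \<le> n" using W carlitz_hd_le[of W]
        by (auto simp: H_def car_def carlitz_alt)
      then show "W \<in> (\<Union>i\<in>{..<n}. cE (Suc i) n)" using W
        by (auto simp: H_def car_def cE_def intro!: bexI[of _ "hd W - 1"])
    qed (auto simp: H_def car_def cE_def)
  qed
  have cH: "card H = (\<Sum>i<n. card (cE (Suc i) n))"
    unfolding H by (rule card_UN_disjoint) (use fin_cE in \<open>auto simp: cE_def\<close>)
  have L: "L = (if 0 < n then {[n]} else {})"
  proof (rule set_eqI)
    fix W show "W \<in> L \<longleftrightarrow> W \<in> (if 0 < n then {[n]} else {})"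
    proof
      assume "W \<in> L"
      then have "carlitz W" "length W < 2" "sum_list W = n" by (auto simp: L_def H_def car_def)
      then show "W \<in> (if 0 < n then {[n]} else {})"
        by (cases W) (auto simp: carlitz_alt)
    qed (auto simp: L_def H_def car_def carlitz_alt split: if_splits)
  qed
  have fH: "finite H" unfolding H by (auto simp: fin_cE)
  have LH: "L \<subseteq> H" by (auto simp: L_def)
  have HC: "H \<subseteq> car n" by (auto simp: H_def)
  have cyc: "{W. cyclic_carlitz W \<and> sum_list W = n} = car n - (H - L)"
    by (auto simp: cyclic_carlitz_def car_def H_def L_def)
  have "card (car n - (H - L)) = card (car n) - card (H - L)"
    by (rule card_Diff_subset) (use fH HC in auto)
  moreover have "card (H - L) = card H - card L"
    by (rule card_Diff_subset) (use fH LH finite_subset in auto)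
  moreover have "card H \<le> card (car n)" by (rule card_mono[OF finite_car' HC])
  moreover have "card L \<le> card H" by (rule card_mono[OF fH LH])
  moreover have "card (H - L) \<le> card (car n)" using HC by (meson Diff_subset card_mono finite_car' order_trans)
  ultimately have "real (card {W. cyclic_carlitz W \<and> sum_list W = n}) = real (card (car n)) - (real (card H) - real (card L))"
    unfolding cyc by (simp add: of_nat_diff)
  then show ?thesis using cH L by simp
qed



definition vanish :: "(nat \<Rightarrow> real fps) \<Rightarrow> bool" where
  "vanish f \<longleftrightarrow> (\<forall>i n. n \<le> i \<longrightarrow> f i $ n = 0)"

lemma vanish_nth_sum:
  assumes "vanish f" "k \<le> m"
  shows "(\<Sum>i<m. f i $ k) = (\<Sum>i<k. f i $ k)"
  by (rule sum.mono_neutral_right) (use assms in \<open>auto simp: vanish_def\<close>)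

lemma vanish_sums:
  assumes "vanish f"
  shows "f sums Abs_fps (\<lambda>n. \<Sum>i<n. f i $ n)"
  unfolding sums_def
proof (rule tendsto_fpsI)
  fix n
  show "\<forall>\<^sub>F x in sequentially. sum f {..<x} $ n = Abs_fps (\<lambda>n. \<Sum>i<n. f i $ n) $ n"
    unfolding eventually_sequentially
  proof (intro exI allI impI)
    fix x assume "n \<le> x"
    show "sum f {..<x} $ n = Abs_fps (\<lambda>n. \<Sum>i<n. f i $ n) $ n"
      using vanish_nth_sum[OF assms \<open>n \<le> x\<close>] by (simp add: fps_sum_nth)
  qed
qed

lemma vanish_suminf: "vanish f \<Longrightarrow> suminf f = Abs_fps (\<lambda>n. \<Sum>i<n. f i $ n)"
  by (rule sums_unique[symmetric], rule vanish_sums)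

lemma vanish_X: "vanish (\<lambda>i. fps_X ^ (i+1) * h i)"
  unfolding vanish_def fps_X_power_mult_nth by simp

lemma vanish_add: "vanish f \<Longrightarrow> vanish g \<Longrightarrow> vanish (\<lambda>i. f i + g i)"
  by (auto simp: vanish_def)

lemma vanish_diff: "vanish f \<Longrightarrow> vanish g \<Longrightarrow> vanish (\<lambda>i. f i - g i)"
  by (auto simp: vanish_def)

lemma vanish_mult: "vanish f \<Longrightarrow> vanish (\<lambda>i. f i * g i)"
  by (auto simp: vanish_def fps_mult_nth intro!: sum.neutral)

lemma suminf_add_v: "vanish f \<Longrightarrow> vanish g \<Longrightarrow> (\<Sum>i. f i + g i) = suminf f + suminf g"
  by (simp add: vanish_suminf vanish_add fps_eq_iff sum.distrib)

lemma suminf_diff_v: "vanish f \<Longrightarrow> vanish g \<Longrightarrow> (\<Sum>i. f i - g i) = suminf f - suminf g"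
  by (simp add: vanish_suminf vanish_diff fps_eq_iff sum_subtractf)

lemma suminf_mult_v:
  assumes "vanish f"
  shows "(\<Sum>i. f i * g) = suminf f * g"
proof -
  have v: "vanish (\<lambda>i. f i * g)" using vanish_mult[OF assms, of "\<lambda>_. g"] .
  have "(\<Sum>i<n. (f i * g) $ n) = (\<Sum>k=0..n. (\<Sum>i<k. f i $ k) * g $ (n - k))" for n
  proof -
    have "(\<Sum>i<n. (f i * g) $ n) = (\<Sum>i<n. \<Sum>k=0..n. f i $ k * g $ (n - k))"
      by (simp add: fps_mult_nth)
    also have "\<dots> = (\<Sum>k=0..n. \<Sum>i<n. f i $ k * g $ (n - k))" by (rule sum.swap)
    also have "\<dots> = (\<Sum>k=0..n. (\<Sum>i<k. f i $ k) * g $ (n - k))"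
    proof (rule sum.cong)
      fix k assume "k \<in> {0..n}"
      then have "k \<le> n" by simp
      show "(\<Sum>i<n. f i $ k * g $ (n - k)) = (\<Sum>i<k. f i $ k) * g $ (n - k)"
        using vanish_nth_sum[OF assms \<open>k \<le> n\<close>] by (simp add: sum_distrib_right[symmetric])
    qed simp
    finally show ?thesis .
  qed
  then show ?thesis
    by (simp add: vanish_suminf[OF v] vanish_suminf[OF assms] fps_eq_iff fps_mult_nth)
qed

lemma div_unit_eq: "(e::real fps) $ 0 \<noteq> 0 \<Longrightarrow> x * e = y \<Longrightarrow> y / e = x"
  by (metis fps_divide_unit inverse_mult_eq_1' mult.assoc mult.right_neutral)



lemma cS_empty: "n < j \<Longrightarrow> cS j n = {}"
  by (auto simp: cS_def dest!: carlitz_hd_le)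
lemma cE_empty: "n < j \<Longrightarrow> cE j n = {}"
  by (auto simp: cE_def dest!: carlitz_hd_le)
lemma car0: "car 0 = {}"
proof -
  have "W \<notin> car 0" for W
  proof
    assume "W \<in> car 0"
    then have "carlitz W" "sum_list W = 0" by (auto simp: car_def)
    with carlitz_sum_pos[of W] show False by simp
  qed
  then show ?thesis by blast
qed

definition "Cf = Abs_fps (\<lambda>n. real (card (car n)))"
definition "Cj i = Abs_fps (\<lambda>n. real (card (cS (i+1) n)))"
definition "Ej i = Abs_fps (\<lambda>n. real (card (cE (i+1) n)))"

lemma Cj_rec: "Cj i = fps_X ^ (i+1) * (1 + Cf - Cj i)"
proof (rule fps_ext)
  fix n
  show "Cj i $ n = (fps_X ^ (i+1) * (1 + Cf - Cj i)) $ n"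
  proof (cases "n < i+1")
    case True then show ?thesis by (simp only: fps_X_power_mult_nth if_True) (simp add: Cj_def cS_empty)
  next
    case False
    then have "(fps_X ^ (i+1) * (1 + Cf - Cj i)) $ n = (1 + Cf - Cj i) $ (n - (i+1))"
      by (simp only: fps_X_power_mult_nth if_False)
    also have "\<dots> = (if n = i+1 then 1 else 0) + (if i+1 < n then real (card (car (n-(i+1)))) - real (card (cS (i+1) (n-(i+1)))) else 0)"
      using False by (cases "n = i+1") (simp_all add: Cj_def Cf_def car0 cS_empty)
    also have "\<dots> = Cj i $ n" using R1[of "i+1" n] by (simp add: Cj_def)
    finally show ?thesis by simp
  qed
qed

lemma Ej_rec: "Ej i = fps_X ^ (i+1) * (1 + Cj i - Ej i)"
proof (rule fps_ext)
  fix n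
  show "Ej i $ n = (fps_X ^ (i+1) * (1 + Cj i - Ej i)) $ n"
  proof (cases "n < i+1")
    case True then show ?thesis by (simp only: fps_X_power_mult_nth if_True) (simp add: Ej_def cE_empty)
  next
    case False
    then have "(fps_X ^ (i+1) * (1 + Cj i - Ej i)) $ n = (1 + Cj i - Ej i) $ (n - (i+1))"
      by (simp only: fps_X_power_mult_nth if_False)
    also have "\<dots> = (if n = i+1 then 1 else 0) + (if i+1 < n then real (card (cS (i+1) (n-(i+1)))) - real (card (cE (i+1) (n-(i+1)))) else 0)"
      using False by (cases "n = i+1") (simp_all add: Cj_def Ej_def cS_empty cE_empty)
    also have "\<dots> = Ej i $ n" using R2[of "i+1" n] by (simp add: Ej_def)
    finally show ?thesis by simp
  qed
qed


definition "bb i = (fps_X ^ (i+1) :: real fps)"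
definition "ee i = 1 + bb i"
definition "aa i = bb i / ee i"

lemma ee0: "ee i $ 0 = 1" by (simp add: ee_def bb_def)
lemma ee_nz: "ee i \<noteq> 0" using ee0[of i] by auto

lemma aa_ee: "aa i * ee i = bb i"
  by (simp add: aa_def fps_divide_unit ee0 inverse_mult_eq_1 mult.assoc)

lemma aa_X: "aa i = fps_X ^ (i+1) * inverse (ee i)"
  by (simp add: aa_def fps_divide_unit ee0 bb_def)

lemma v_aa: "vanish aa"
  unfolding aa_X by (rule vanish_X)

lemma v_bb: "vanish bb"
  by (auto simp: vanish_def bb_def fps_X_power_nth)

lemma v_Cj: "vanish Cj"
  by (auto simp: vanish_def Cj_def cS_empty)

lemma v_Ej: "vanish Ej"
  by (auto simp: vanish_def Ej_def cE_empty)

lemma cancel_ee: "x * ee i = y * ee i \<Longrightarrow> x = y"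
  using ee_nz by simp

lemma Cj_eq: "Cj i = aa i * (1 + Cf)"
proof (rule cancel_ee[of _ i])
  have "Cj i * ee i = Cj i + bb i * Cj i" by (simp add: ee_def algebra_simps)
  also have "\<dots> = bb i * (1 + Cf - Cj i) + bb i * Cj i"
    using arg_cong[OF Cj_rec[of i], of "\<lambda>z. z + bb i * Cj i"] unfolding bb_def .
  also have "\<dots> = bb i * (1 + Cf)" by (simp add: algebra_simps)
  also have "\<dots> = aa i * (1 + Cf) * ee i" using aa_ee[of i] by (simp add: algebra_simps)
  finally show "Cj i * ee i = aa i * (1 + Cf) * ee i" .
qed

lemma Ej_eq: "Ej i = aa i * (1 + Cj i)"
proof (rule cancel_ee[of _ i])
  have "Ej i * ee i = Ej i + bb i * Ej i" by (simp add: ee_def algebra_simps)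
  also have "\<dots> = bb i * (1 + Cj i - Ej i) + bb i * Ej i"
    using arg_cong[OF Ej_rec[of i], of "\<lambda>z. z + bb i * Ej i"] unfolding bb_def .
  also have "\<dots> = bb i * (1 + Cj i)" by (simp add: algebra_simps)
  also have "\<dots> = aa i * (1 + Cj i) * ee i" using aa_ee[of i] by (simp add: algebra_simps)
  finally show "Ej i * ee i = aa i * (1 + Cj i) * ee i" .
qed

lemma Cf_sum: "Cf = suminf Cj"
  unfolding vanish_suminf[OF v_Cj]
  by (simp add: fps_eq_iff Cf_def Cj_def card_car_sum)

lemma Y_nth: "suminf bb $ n = (if 0 < n then 1 else 0)"
proof -
  have "suminf bb $ n = (\<Sum>i<n. bb i $ n)" by (simp add: vanish_suminf[OF v_bb])
  also have "\<dots> = (if 0 < n then 1 else 0)"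
  proof (cases n)
    case (Suc m)
    have "(\<Sum>i<Suc m. bb i $ Suc m) = (\<Sum>i<Suc m. if i = m then 1 else 0)"
      by (rule sum.cong) (auto simp: bb_def fps_X_power_nth)
    then show ?thesis using Suc by simp
  qed simp
  finally show ?thesis .
qed

lemma G_eq: "cyc_carlitz_gf = Cf - suminf Ej + suminf bb"
  by (simp add: fps_eq_iff cyc_carlitz_gf_def R3 Y_nth vanish_suminf[OF v_Ej] Cf_def Ej_def)


lemma term1: "fps_X ^ (i+1) / (1 + fps_X ^ (i+1)) ^ 2 = aa i - aa i * aa i"
proof -
  have e: "(1 + fps_X ^ (i+1)) ^ 2 = ee i ^ 2" by (simp add: ee_def bb_def)
  have "(aa i - aa i * aa i) * ee i ^ 2 = (aa i * ee i) * ee i - (aa i * ee i) * (aa i * ee i)"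
    by (simp add: algebra_simps power2_eq_square)
  also have "\<dots> = bb i" unfolding aa_ee by (simp add: ee_def algebra_simps)
  finally have "(aa i - aa i * aa i) * ee i ^ 2 = bb i" .
  moreover have "(ee i ^ 2) $ 0 \<noteq> 0" using ee0[of i] by (simp add: power2_eq_square fps_mult_nth)
  ultimately show ?thesis unfolding e by (simp add: div_unit_eq bb_def)
qed

lemma term2: "fps_X ^ (2*(i+1)) / (1 + fps_X ^ (i+1)) = bb i - aa i"
proof -
  have "(bb i - aa i) * ee i = bb i * ee i - bb i" by (simp add: algebra_simps aa_ee)
  also have "\<dots> = bb i * bb i" by (simp add: ee_def algebra_simps)
  also have "\<dots> = fps_X ^ (2*(i+1))" unfolding bb_def by (metis mult_2 power_add)
  finally have "(bb i - aa i) * ee i = fps_X ^ (2*(i+1))" .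
  then have "fps_X ^ (2*(i+1)) / ee i = bb i - aa i"
    by (intro div_unit_eq) (simp_all add: ee0)
  then show ?thesis by (simp only: ee_def bb_def)
qed

theorem corollary5p4:
  shows "cyc_carlitz_gf =
    (\<Sum>i. fps_X ^ (i+1) / (1 + fps_X ^ (i+1)) ^ 2)
      / (1 - (\<Sum>i. fps_X ^ (i+1) / (1 + fps_X ^ (i+1))))
    + (\<Sum>i. fps_X ^ (2*(i+1)) / (1 + fps_X ^ (i+1)))"
proof -
  define S where "S = suminf aa"
  define Q where "Q = (\<Sum>i. aa i * aa i)"
  define Y where "Y = suminf bb"
  define D where "D = 1 + Cf"
  have vQ: "vanish (\<lambda>i. aa i * aa i)" by (rule vanish_mult[OF v_aa])
  have 1: "Cf = S * D"
  proof -
    have "Cj = (\<lambda>i. aa i * D)" by (rule ext) (simp add: Cj_eq D_def)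
    then have "Cf = (\<Sum>i. aa i * D)" using Cf_sum by simp
    also have "\<dots> = S * D" unfolding S_def by (rule suminf_mult_v[OF v_aa])
    finally show ?thesis .
  qed
  have 2: "suminf Ej = S + Q * D"
  proof -
    have "Ej = (\<lambda>i. aa i + (aa i * aa i) * D)"
      by (rule ext) (simp add: Ej_eq Cj_eq D_def algebra_simps)
    then have "suminf Ej = (\<Sum>i. aa i + (aa i * aa i) * D)" by simp
    also have "\<dots> = S + (\<Sum>i. (aa i * aa i) * D)" unfolding S_def
      by (rule suminf_add_v[OF v_aa vanish_mult[OF vQ]])
    also have "(\<Sum>i. (aa i * aa i) * D) = Q * D" unfolding Q_def by (rule suminf_mult_v[OF vQ])
    finally show ?thesis .
  qed
  have 3: "(\<Sum>i. fps_X ^ (i+1) / (1 + fps_X ^ (i+1)) ^ 2) = S - Q"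
    unfolding term1 S_def Q_def by (rule suminf_diff_v[OF v_aa vQ])
  have 4: "(\<Sum>i. fps_X ^ (i+1) / (1 + fps_X ^ (i+1))) = S"
  proof -
    have "aa = (\<lambda>i. fps_X ^ (i+1) / (1 + fps_X ^ (i+1)))"
      by (rule ext) (simp only: aa_def bb_def ee_def)
    then show ?thesis by (simp only: S_def)
  qed
  have 5: "(\<Sum>i. fps_X ^ (2*(i+1)) / (1 + fps_X ^ (i+1))) = Y - S"
    unfolding term2 S_def Y_def by (rule suminf_diff_v[OF v_bb v_aa])
  have S0: "S $ 0 = 0" by (simp add: S_def vanish_suminf[OF v_aa])
  have 6: "(S - Q) / (1 - S) = (S - Q) * D"
  proof (rule div_unit_eq)
    show "(1 - S) $ 0 \<noteq> 0" using S0 by simp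
    have "(S - Q) * D * (1 - S) = (S - Q) * (D - S * D)" by (simp add: algebra_simps)
    also have "D - S * D = 1" using 1 by (simp add: D_def)
    finally show "(S - Q) * D * (1 - S) = S - Q" by simp
  qed
  show ?thesis unfolding 3 4 5 6 G_eq 2 Y_def[symmetric] 1
    by (simp add: algebra_simps)
qed

end
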